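(* Let $P_\sigma:=\{(S_1,S_2)\in\mathbb{R}^2:S_1+S_2\le1\}$, $I:=1-S_1-S_2$, $\mathcal{P}:=\{(X,I):I\ge0\}$, $\mathcal{B}:=\{(\beta_1,\beta_2)\in\mathbb{R}^2:\beta_1>\beta_2\}$ and $G_\sigma:=\{g\in GL_2(\mathbb{R}):\det g>0,\ g_{11}+g_{21}=g_{12}+g_{22}=1\}$. For $\beta\in\mathcal{B}$ let $\varphi_\beta(S)=(\beta_1S_1+\beta_2S_2,1-S_1-S_2)$. An SSISS vector field with transmission pair $\beta\in\mathcal{B}$ is a vector field on $P_\sigma$ of the form $$F(S)=\big(-\beta_1S_1I-\Omega_1(S)S_1+\Omega_2(S)S_2+\gamma_1I,\ -\beta_2S_2I+\Omega_1(S)S_1-\Omega_2(S)S_2+\gamma_2I\big)$$ with $\Omega_1,\Omega_2\in C^\infty(P_\sigma)$ and $\gamma_1+\gamma_2=1$ (the pair $\beta$ is determined by $F$). Then: (i) If $F$ is an SSISS vector field with pair $\beta$ and $(\varphi_\beta)_*F=f\partial_X+(X-1)I\partial_I$ for some $f\in C^\infty(\mathcal{P})$, then for every $g\in G_\sigma$ the vector field $g_*F$ is an SSISS vector field with pair $\beta g^{-1}$ and $(\varphi_{\beta g^{-1}})_*(g_*F)=f\partial_X+(X-1)I\partial_I$. (ii) If $F$, $F'$ are SSISS vector fields with pairs $\beta,\beta'$ respectively and $(\varphi_\beta)_*F=(\varphi_{\beta'})_*F'=f\partial_X+(X-1)I\partial_I$ for the same $f$, then there exists a unique $g\in G_\sigma$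 with $\beta'=\beta g^{-1}$ and $F'=g_*F$.
   Context: Here $g\in G_\sigma$ acts linearly on column vectors $S=(S_1,S_2)^T$ (and preserves $P_\sigma$), $\beta$ is a row vector, and $g_*F:=g\circ F\circ g^{-1}$ is the push-forward; similarly $(\varphi_\beta)_*F=D\varphi_\beta\circ F\circ\varphi_\beta^{-1}$. *)

theory Defs
  imports "HOL-Analysis.Analysis"
begin

fun Ck_open :: "nat \<Rightarrow> 'a::real_normed_vector set \<Rightarrow> ('a \<Rightarrow> 'b::real_normed_vector) \<Rightarrow> bool" where
  "Ck_open 0 U f = continuous_on U f"
| "Ck_open (Suc k) U f =
     (\<exists>D. (\<forall>x\<in>U. (f has_derivative D x) (at x)) \<and> (\<forall>v. Ck_open k U (\<lambda>x. D x v)))"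

definition smooth_open :: "'a::real_normed_vector set \<Rightarrow> ('a \<Rightarrow> 'b::real_normed_vector) \<Rightarrow> bool" where
  "smooth_open U f \<longleftrightarrow> open U \<and> (\<forall>k. Ck_open k U f)"

text \<open>C^infinity on an arbitrary (e.g. closed) set S: restriction of a smooth function
  defined on an open neighbourhood of S.\<close>
definition smooth_on_set :: "'a::real_normed_vector set \<Rightarrow> ('a \<Rightarrow> 'b::real_normed_vector) \<Rightarrow> bool" where
  "smooth_on_set S f \<longleftrightarrow> (\<exists>U h. S \<subseteq> U \<and> smooth_open U h \<and> (\<forall>x\<in>S. h x = f x))"

definition P_sigma :: "(real^2) set" where
  "P_sigma = {S. S$1 + S$2 \<le> 1}"

definition P_cal :: "(real^2) set" where   \<comment> \<open>coordinates (X, I) = (p$1, p$2)\<close>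
  "P_cal = {p. p$2 \<ge> 0}"

definition B_cal :: "(real^2) set" where
  "B_cal = {b. b$1 > b$2}"

definition G_sigma :: "(real^2^2) set" where
  "G_sigma = {g. det g > 0 \<and> g$1$1 + g$2$1 = 1 \<and> g$1$2 + g$2$2 = 1}"

definition push_aff :: "real^2^2 \<Rightarrow> real^2 \<Rightarrow> (real^2 \<Rightarrow> real^2) \<Rightarrow> (real^2 \<Rightarrow> real^2)" where
  "push_aff A c F = (\<lambda>y. A *v F (matrix_inv A *v (y - c)))"

definition push_lin :: "real^2^2 \<Rightarrow> (real^2 \<Rightarrow> real^2) \<Rightarrow> (real^2 \<Rightarrow> real^2)" where
  "push_lin g F = push_aff g 0 F"

text \<open>phi_beta(S) = (beta1 S1 + beta2 S2, 1 - S1 - S2) = L_beta S + (0,1).\<close>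
definition L_phi :: "real^2 \<Rightarrow> real^2^2" where
  "L_phi b = vector [vector [b$1, b$2], vector [-1, -1]]"

definition phi :: "real^2 \<Rightarrow> real^2 \<Rightarrow> real^2" where
  "phi b S = L_phi b *v S + vector [0, 1]"

definition push_phi :: "real^2 \<Rightarrow> (real^2 \<Rightarrow> real^2) \<Rightarrow> (real^2 \<Rightarrow> real^2)" where
  "push_phi b F = push_aff (L_phi b) (vector [0, 1]) F"

definition model_field :: "(real^2 \<Rightarrow> real) \<Rightarrow> real^2 \<Rightarrow> real^2" where
  "model_field f p = vector [f p, (p$1 - 1) * p$2]"

definition ssiss :: "(real^2 \<Rightarrow> real^2) \<Rightarrow> real^2 \<Rightarrow> bool" where
  "ssiss F b \<longleftrightarrow> b \<in> B_cal \<and>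
     (\<exists>\<Omega>1 \<Omega>2 :: real^2 \<Rightarrow> real. \<exists>\<gamma>1 \<gamma>2 :: real.
        smooth_on_set P_sigma \<Omega>1 \<and> smooth_on_set P_sigma \<Omega>2 \<and> \<gamma>1 + \<gamma>2 = 1 \<and>
        (\<forall>S\<in>P_sigma. let I = 1 - S$1 - S$2 in
           F S = vector [- b$1 * S$1 * I - \<Omega>1 S * S$1 + \<Omega>2 S * S$2 + \<gamma>1 * I,
                         - b$2 * S$2 * I + \<Omega>1 S * S$1 - \<Omega>2 S * S$2 + \<gamma>2 * I]))"

end

theory Submission
  imports Defs
begin


lemma Ck_mono_set: "Ck_open k U f \<Longrightarrow> V \<subseteq> U \<Longrightarrow> Ck_open k V f"
proof (induction k arbitrary: f)
  case 0 then show ?case using continuous_on_subset by auto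
next
  case (Suc k)
  then obtain D where "\<forall>x\<in>U. (f has_derivative D x) (at x)" "\<forall>v. Ck_open k U (\<lambda>x. D x v)" by auto
  then show ?case using Suc.IH Suc.prems(2) by (metis Ck_open.simps(2) subsetD)
qed

lemma Ck_add: "Ck_open k U f \<Longrightarrow> Ck_open k U g \<Longrightarrow> Ck_open k U (\<lambda>x. f x + g x)"
proof (induction k arbitrary: f g)
  case 0 then show ?case by (auto intro: continuous_on_add)
next
  case (Suc k)
  from Suc.prems(1) obtain D where D: "\<forall>x\<in>U. (f has_derivative D x) (at x)" "\<forall>v. Ck_open k U (\<lambda>x. D x v)" by auto
  from Suc.prems(2) obtain E where E: "\<forall>x\<in>U. (g has_derivative E x) (at x)" "\<forall>v. Ck_open k U (\<lambda>x. E x v)" by auto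
  show ?case
    apply simp
    apply (rule exI[of _ "\<lambda>x v. D x v + E x v"])
    using D E Suc.IH by (auto intro: has_derivative_add)
qed

lemma Ck_scale: "Ck_open k U f \<Longrightarrow> Ck_open k U (\<lambda>x. c * (f x :: real))"
proof (induction k arbitrary: f)
  case 0 then show ?case by (auto intro: continuous_on_mult_left)
next
  case (Suc k)
  from Suc.prems(1) obtain D where D: "\<forall>x\<in>U. (f has_derivative D x) (at x)" "\<forall>v. Ck_open k U (\<lambda>x. D x v)" by auto
  show ?case
    apply simp
    apply (rule exI[of _ "\<lambda>x v. c * D x v"])
    using D Suc.IH by (auto intro: has_derivative_mult_right)
qed

lemma Ck_const: "Ck_open k U (\<lambda>x. c)"
proof (induction k arbitrary: c)
  case 0 then show ?case by auto
next
  case (Suc k)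
  show ?case
    apply simp
    apply (rule exI[of _ "\<lambda>x v. 0"])
    using Suc.IH by auto
qed

lemma Ck_lin: "bounded_linear l \<Longrightarrow> Ck_open k U l"
proof (cases k)
  case 0 assume "bounded_linear l" then show ?thesis
    using 0 by (simp add: linear_continuous_on)
next
  case (Suc m)
  assume l: "bounded_linear l"
  show ?thesis unfolding Suc
    apply simp
    apply (rule exI[of _ "\<lambda>x v. l v"])
    using l Ck_const by (auto intro: bounded_linear_imp_has_derivative)
qed

lemma Ck_comp_lin: "Ck_open k U h \<Longrightarrow> bounded_linear L \<Longrightarrow> Ck_open k (L -` U) (\<lambda>y. h (L y))"
proof (induction k arbitrary: h)
  case 0
  then show ?case
    using continuous_on_compose2[of U h "L -` U" L] linear_continuous_on[of L] by auto
next
  case (Suc k)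
  from Suc.prems(1) obtain D where D: "\<forall>x\<in>U. (h has_derivative D x) (at x)" "\<forall>v. Ck_open k U (\<lambda>x. D x v)" by auto
  have "(\<lambda>y. h (L y)) = h \<circ> L" by auto
  show ?case
    apply simp
    apply (rule exI[of _ "\<lambda>y v. D (L y) (L v)"])
    apply safe
    subgoal for y
      using diff_chain_at[OF bounded_linear_imp_has_derivative[OF Suc.prems(2)], of h "D (L y)"] D(1)
      by (simp add: o_def)
    subgoal for v using Suc.IH[OF D(2)[rule_format, of "L v"] Suc.prems(2)] by simp
    done
qed

lemma smooth_add: "smooth_on_set S f \<Longrightarrow> smooth_on_set S g \<Longrightarrow> smooth_on_set S (\<lambda>x. f x + g x)"
  unfolding smooth_on_set_def smooth_open_def
proof (elim exE conjE)
  fix U hf V hg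
  assume *: "S \<subseteq> U" "open U" "\<forall>k. Ck_open k U hf" "\<forall>x\<in>S. hf x = f x"
     "S \<subseteq> V" "open V" "\<forall>k. Ck_open k V hg" "\<forall>x\<in>S. hg x = g x"
  show "\<exists>U h. S \<subseteq> U \<and> (open U \<and> (\<forall>k. Ck_open k U h)) \<and> (\<forall>x\<in>S. h x = f x + g x)"
    apply (rule exI[of _ "U \<inter> V"], rule exI[of _ "\<lambda>x. hf x + hg x"])
    using * by (auto intro!: Ck_add elim: Ck_mono_set)
qed

lemma smooth_scale: "smooth_on_set S f \<Longrightarrow> smooth_on_set S (\<lambda>x. c * (f x :: real))"
  unfolding smooth_on_set_def smooth_open_def
  by (metis Ck_scale)

lemma smooth_const: "smooth_on_set S (\<lambda>x. c)"
  unfolding smooth_on_set_def smooth_open_def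
  by (metis Ck_const open_UNIV subset_UNIV)

lemma smooth_lin: "bounded_linear l \<Longrightarrow> smooth_on_set S l"
  unfolding smooth_on_set_def smooth_open_def
  by (metis Ck_lin open_UNIV subset_UNIV)

lemma smooth_comp_lin: "smooth_on_set S f \<Longrightarrow> bounded_linear L \<Longrightarrow> L ` T \<subseteq> S \<Longrightarrow> smooth_on_set T (\<lambda>y. f (L y))"
  unfolding smooth_on_set_def smooth_open_def
proof (elim exE conjE)
  fix U hf
  assume *: "S \<subseteq> U" "open U" "\<forall>k. Ck_open k U hf" "\<forall>x\<in>S. hf x = f x" "bounded_linear L" "L ` T \<subseteq> S"
  have T: "T \<subseteq> L -` U" using *(1,6) by blast
  show "\<exists>U h. T \<subseteq> U \<and> (open U \<and> (\<forall>k. Ck_open k U h)) \<and> (\<forall>x\<in>T. h x = f (L x))"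
    apply (rule exI[of _ "L -` U"], rule exI[of _ "\<lambda>x. hf (L x)"])
    using * T by (auto intro!: Ck_comp_lin continuous_open_vimage linear_continuous_at)
qed



definition inv2 :: "real^2^2 \<Rightarrow> real^2^2" where
  "inv2 A = vector [vector [A$2$2 / det A, - A$1$2 / det A], vector [- A$2$1 / det A, A$1$1 / det A]]"

lemma inv2_props:
  fixes A :: "real^2^2" assumes "det A \<noteq> 0"
  shows "A ** inv2 A = mat 1 \<and> inv2 A ** A = mat 1"
  using assms
  apply (simp add: vec_eq_iff forall_2 matrix_matrix_mult_def sum_2 mat_def inv2_def)
  apply (simp add: field_simps)
  apply (simp add: det_2 algebra_simps)
  done

lemma matrix_inv_eq:
  fixes A B :: "real^'n^'n"
  assumes "A ** B = mat 1" "B ** A = mat 1"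
  shows "matrix_inv A = B"
proof -
  have "\<exists>A'. A ** A' = mat 1 \<and> A' ** A = mat 1" using assms by blast
  then have *: "A ** matrix_inv A = mat 1 \<and> matrix_inv A ** A = mat 1"
    unfolding matrix_inv_def by (rule someI_ex)
  have "matrix_inv A = matrix_inv A ** (A ** B)" using assms by simp
  also have "\<dots> = B" using * by (simp add: matrix_mul_assoc)
  finally show ?thesis .
qed

lemma matrix_inv2: fixes A :: "real^2^2" assumes "det A \<noteq> 0" shows "matrix_inv A = inv2 A"
  using matrix_inv_eq inv2_props[OF assms] by blast
lemmas inv2_props' = inv2_props[THEN conjunct1] inv2_props[THEN conjunct2]

lemma G_det: "g \<in> G_sigma \<Longrightarrow> det g = g$1$1 - g$1$2"
proof -
  assume "g \<in> G_sigma"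
  then have "g$2$1 = 1 - g$1$1" "g$2$2 = 1 - g$1$2" unfolding G_sigma_def by auto
  then show ?thesis by (simp only: det_2) (simp add: algebra_simps)
qed

lemma G_inv: "g \<in> G_sigma \<Longrightarrow> det g \<noteq> 0 \<and> g ** matrix_inv g = mat 1 \<and> matrix_inv g ** g = mat 1"
  using inv2_props matrix_inv2 unfolding G_sigma_def by auto

lemma L_det: "b \<in> B_cal \<Longrightarrow> det (L_phi b) \<noteq> 0"
  unfolding B_cal_def L_phi_def by (auto simp: det_2)

lemma L_inv: "b \<in> B_cal \<Longrightarrow> L_phi b ** matrix_inv (L_phi b) = mat 1 \<and> matrix_inv (L_phi b) ** L_phi b = mat 1"
  using inv2_props matrix_inv2 L_det by auto

lemma one_v_mat: "(vector [1,1] :: real^2) v* (M::real^2^2) = vector [M$1$1 + M$2$1, M$1$2 + M$2$2]"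
  by (simp add: vec_eq_iff forall_2 vector_matrix_mult_def sum_2)

lemma h_colsum: assumes "g \<in> G_sigma"
  shows "matrix_inv g $1$1 + matrix_inv g $2$1 = 1" "matrix_inv g $1$2 + matrix_inv g $2$2 = 1"
proof -
  have g: "(vector [1,1] :: real^2) v* g = vector [1,1]"
    using assms unfolding G_sigma_def one_v_mat by simp
  have "(vector [1,1] :: real^2) v* matrix_inv g = (vector [1,1] v* g) v* matrix_inv g" using g by simp
  also have "\<dots> = vector [1,1]" using G_inv[OF assms] by (simp add: vector_matrix_mul_assoc)
  finally show "matrix_inv g $1$1 + matrix_inv g $2$1 = 1" "matrix_inv g $1$2 + matrix_inv g $2$2 = 1"
    unfolding one_v_mat by (simp_all add: vec_eq_iff forall_2)
qed

lemma L_G: assumes "g \<in> G_sigma" shows "L_phi b ** matrix_inv g = L_phi (b v* matrix_inv g)"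
  using h_colsum[OF assms]
  by (simp add: vec_eq_iff forall_2 matrix_matrix_mult_def vector_matrix_mult_def sum_2 L_phi_def algebra_simps)



lemma alg1:
  fixes a c bA bB yA yB wA wB gA gB hA hB hC hD :: real
  assumes "a - c \<noteq> 0"
    and h: "hA = (1-c)/(a-c)" "hB = -c/(a-c)" "hC = (a-1)/(a-c)" "hD = a/(a-c)"
  shows
  "let SA = hA*yA + hB*yB; SB = hC*yA + hD*yB; I = 1 - SA - SB; J = 1 - yA - yB;
       FA = - bA * SA * I - wA * SA + wB * SB + gA * I;
       FB = - bB * SB * I + wA * SA - wB * SB + gB * I;
       bP = bA*hA + bB*hC; bQ = bA*hB + bB*hD;
       dA = a*bA*hA + c*bB*hC - bP; dB = a*bA*hB + c*bB*hD;
       WA = (1-c)*wA + (1-a)*wB + dA*J; WB = c*wA + a*wB - dB*J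
   in a*FA + c*FB = - bP * yA * J - WA * yA + WB * yB + (a*gA + c*gB) * J \<and>
      (1-a)*FA + (1-c)*FB = - bQ * yB * J + WA * yA - WB * yB + ((1-a)*gA + (1-c)*gB) * J"
proof -
  have e1: "(a-c)*hA = 1-c" "(a-c)*hB = -c" "(a-c)*hC = a-1" "(a-c)*hD = a"
    using assms by (simp_all add: field_simps)
  obtain e where e: "(a-c)*e = 1" using assms(1) by (metis right_inverse)
  show ?thesis unfolding Let_def using e1 e by algebra
qed



lemma push_phi_G:
  assumes "b \<in> B_cal" "g \<in> G_sigma"
  shows "push_phi (b v* matrix_inv g) (push_lin g F) p = push_phi b F p"
proof -
  define h where "h = matrix_inv g"
  define L where "L = L_phi b"
  define Li where "Li = matrix_inv L"
  have gh: "g ** h = mat 1" "h ** g = mat 1" using G_inv[OF assms(2)] h_def by auto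
  have LL: "L ** Li = mat 1" "Li ** L = mat 1" using L_inv[OF assms(1)] L_def Li_def by auto
  have L': "L_phi (b v* h) = L ** h" using L_G[OF assms(2)] h_def L_def by simp
  have mi: "matrix_inv (L ** h) = g ** Li"
  proof (rule matrix_inv_eq)
    have "(L ** h) ** (g ** Li) = L ** ((h ** g) ** Li)" by (simp add: matrix_mul_assoc)
    then show "(L ** h) ** (g ** Li) = mat 1" using gh LL by simp
    have "(g ** Li) ** (L ** h) = g ** ((Li ** L) ** h)" by (simp add: matrix_mul_assoc)
    then show "(g ** Li) ** (L ** h) = mat 1" using gh LL by simp
  qed
  have "push_phi (b v* h) (push_lin g F) p
      = (L ** h) *v (g *v F (h *v ((g ** Li) *v (p - vector [0,1]))))"
    unfolding push_phi_def push_lin_def push_aff_def h_def[symmetric] L' mi by simp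
  also have "\<dots> = ((L ** h) ** g) *v F ((h ** (g ** Li)) *v (p - vector [0,1]))"
    by (simp add: matrix_vector_mul_assoc)
  also have "\<dots> = (L ** (h ** g)) *v F (((h ** g) ** Li) *v (p - vector [0,1]))"
    by (simp add: matrix_mul_assoc)
  also have "\<dots> = push_phi b F p"
    unfolding push_phi_def push_aff_def gh L_def Li_def by simp
  finally show ?thesis unfolding h_def .
qed

lemma G_entries:
  assumes "g \<in> G_sigma"
  shows "g$2$1 = 1 - g$1$1" "g$2$2 = 1 - g$1$2" "g$1$1 - g$1$2 > 0"
    "matrix_inv g $1$1 = (1 - g$1$2)/(g$1$1 - g$1$2)"
    "matrix_inv g $1$2 = - g$1$2/(g$1$1 - g$1$2)"
    "matrix_inv g $2$1 = (g$1$1 - 1)/(g$1$1 - g$1$2)"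
    "matrix_inv g $2$2 = g$1$1/(g$1$1 - g$1$2)"
proof -
  show g: "g$2$1 = 1 - g$1$1" "g$2$2 = 1 - g$1$2" using assms unfolding G_sigma_def by auto
  have d: "det g = g$1$1 - g$1$2" using G_det[OF assms] .
  show "g$1$1 - g$1$2 > 0" using assms d unfolding G_sigma_def by auto
  have d0: "det g \<noteq> 0" using G_inv[OF assms] by auto
  show "matrix_inv g $1$1 = (1 - g$1$2)/(g$1$1 - g$1$2)"
    "matrix_inv g $1$2 = - g$1$2/(g$1$1 - g$1$2)"
    "matrix_inv g $2$1 = (g$1$1 - 1)/(g$1$1 - g$1$2)"
    "matrix_inv g $2$2 = g$1$1/(g$1$1 - g$1$2)"
    unfolding matrix_inv2[OF d0] inv2_def d g by (simp_all add: minus_divide_left[symmetric])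
qed

lemma mv2: "((M::real^2^2) *v x) $ 1 = M$1$1 * x$1 + M$1$2 * x$2"
  "((M::real^2^2) *v x) $ 2 = M$2$1 * x$1 + M$2$2 * x$2"
  by (simp_all add: matrix_vector_mult_def sum_2)

lemma vm2: "(x v* (M::real^2^2)) $ 1 = x$1 * M$1$1 + x$2 * M$2$1"
  "(x v* (M::real^2^2)) $ 2 = x$1 * M$1$2 + x$2 * M$2$2"
  by (simp_all add: vector_matrix_mult_def sum_2)

lemma smooth_aff: "smooth_on_set S (\<lambda>y::real^2. 1 - y$1 - y$2)"
proof -
  have "smooth_on_set S (\<lambda>y::real^2. 1 + (- y$1 - y$2))"
    by (rule smooth_add[OF smooth_const smooth_lin]) (intro bounded_linear_sub bounded_linear_minus bounded_linear_vec_nth)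
  moreover have "(\<lambda>y::real^2. 1 + (- y$1 - y$2)) = (\<lambda>y::real^2. 1 - y$1 - y$2)" by (auto simp: fun_eq_iff)
  ultimately show ?thesis by simp
qed

lemma ssiss_G:
  assumes "ssiss F b" "g \<in> G_sigma"
  shows "ssiss (push_lin g F) (b v* matrix_inv g)"
proof -
  from assms(1) obtain \<Omega>1 \<Omega>2 \<gamma>1 \<gamma>2 where bB: "b \<in> B_cal" and
    sm1: "smooth_on_set P_sigma \<Omega>1" and sm2: "smooth_on_set P_sigma \<Omega>2" and gs: "\<gamma>1 + \<gamma>2 = 1" and
    eqF: "\<forall>S\<in>P_sigma. let I = 1 - S$1 - S$2 in
           F S = vector [- b$1 * S$1 * I - \<Omega>1 S * S$1 + \<Omega>2 S * S$2 + \<gamma>1 * I,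
                         - b$2 * S$2 * I + \<Omega>1 S * S$1 - \<Omega>2 S * S$2 + \<gamma>2 * I]"
    unfolding ssiss_def by blast
  define h where "h = matrix_inv g"
  define a where "a = g$1$1"
  define c where "c = g$1$2"
  note GE = G_entries[OF assms(2), folded h_def a_def c_def]
  define b' where "b' = b v* h"
  have b'1: "b'$1 = b$1 * h$1$1 + b$2 * h$2$1" and b'2: "b'$2 = b$1 * h$1$2 + b$2 * h$2$2"
    unfolding b'_def vm2 by auto
  have "(a - c) * (b'$1 - b'$2) = b$1 - b$2"
  proof -
    have "a - c \<noteq> 0" using GE(3) by simp
    then have e1: "(a-c)*h$1$1 = 1-c" "(a-c)*h$1$2 = -c" "(a-c)*h$2$1 = a-1" "(a-c)*h$2$2 = a"
      unfolding GE(4-7) by (simp_all add: field_simps)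
    show ?thesis unfolding b'1 b'2 using e1 by algebra
  qed
  then have "0 < (a - c) * (b'$1 - b'$2)" using bB unfolding B_cal_def by simp
  then have "0 < b'$1 - b'$2" using GE(3) zero_less_mult_pos by blast
  then have b'B: "b' \<in> B_cal" unfolding B_cal_def by simp
  define d1 where "d1 = a*b$1*h$1$1 + c*b$2*h$2$1 - b'$1"
  define d2 where "d2 = a*b$1*h$1$2 + c*b$2*h$2$2"
  define W1 where "W1 = (\<lambda>y. (1-c) * \<Omega>1 (h *v y) + (1-a) * \<Omega>2 (h *v y) + d1 * (1 - y$1 - y$2))"
  define W2 where "W2 = (\<lambda>y. c * \<Omega>1 (h *v y) + a * \<Omega>2 (h *v y) + (-d2) * (1 - y$1 - y$2))"
  have hP: "((*v) h) ` P_sigma \<subseteq> P_sigma"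
  proof
    fix z assume "z \<in> (*v) h ` P_sigma"
    then obtain y where y: "y \<in> P_sigma" "z = h *v y" by auto
    have "z$1 + z$2 = (h$1$1 + h$2$1) * y$1 + (h$1$2 + h$2$2) * y$2"
      unfolding y mv2 by (simp add: algebra_simps)
    also have "\<dots> = y$1 + y$2" using h_colsum[OF assms(2)] h_def by simp
    finally show "z \<in> P_sigma" using y(1) unfolding P_sigma_def by simp
  qed
  have s1: "smooth_on_set P_sigma (\<lambda>y. \<Omega>1 (h *v y))"
    using smooth_comp_lin[OF sm1 matrix_vector_mul_bounded_linear hP] .
  have s2: "smooth_on_set P_sigma (\<lambda>y. \<Omega>2 (h *v y))"
    using smooth_comp_lin[OF sm2 matrix_vector_mul_bounded_linear hP] .
  have sW1: "smooth_on_set P_sigma W1" unfolding W1_def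
    by (intro smooth_add smooth_scale s1 s2 smooth_aff)
  have sW2: "smooth_on_set P_sigma W2" unfolding W2_def
    by (intro smooth_add smooth_scale s1 s2 smooth_aff)
  have gs': "(a*\<gamma>1 + c*\<gamma>2) + ((1-a)*\<gamma>1 + (1-c)*\<gamma>2) = 1" using gs by (simp add: algebra_simps)
  have eq: "\<forall>y\<in>P_sigma. let I = 1 - y$1 - y$2 in
           push_lin g F y = vector [- b'$1 * y$1 * I - W1 y * y$1 + W2 y * y$2 + (a*\<gamma>1 + c*\<gamma>2) * I,
                         - b'$2 * y$2 * I + W1 y * y$1 - W2 y * y$2 + ((1-a)*\<gamma>1 + (1-c)*\<gamma>2) * I]"
  proof
    fix y assume y: "y \<in> P_sigma"
    define S where "S = h *v y"
    have SP: "S \<in> P_sigma" using hP y S_def by auto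
    have FS: "F S = vector [- b$1 * S$1 * (1 - S$1 - S$2) - \<Omega>1 S * S$1 + \<Omega>2 S * S$2 + \<gamma>1 * (1 - S$1 - S$2),
                         - b$2 * S$2 * (1 - S$1 - S$2) + \<Omega>1 S * S$1 - \<Omega>2 S * S$2 + \<gamma>2 * (1 - S$1 - S$2)]"
      using eqF SP unfolding Let_def by auto
    have pl: "push_lin g F y = g *v F S" unfolding push_lin_def push_aff_def S_def h_def by simp
    have S1: "S$1 = h$1$1 * y$1 + h$1$2 * y$2" and S2: "S$2 = h$2$1 * y$1 + h$2$2 * y$2"
      unfolding S_def mv2 by auto
    have W1y: "W1 y = (1-c) * \<Omega>1 S + (1-a) * \<Omega>2 S + d1 * (1 - y$1 - y$2)"
      unfolding W1_def S_def by simp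
    have W2y: "W2 y = c * \<Omega>1 S + a * \<Omega>2 S - d2 * (1 - y$1 - y$2)"
      unfolding W2_def S_def by simp
    have ac: "a - c \<noteq> 0" using GE(3) by simp
    have A2: "a * (- b$1 * (h$1$1 * y$1 + h$1$2 * y$2) * (1 - (h$1$1 * y$1 + h$1$2 * y$2) - (h$2$1 * y$1 + h$2$2 * y$2)) - \<Omega>1 S * (h$1$1 * y$1 + h$1$2 * y$2) + \<Omega>2 S * (h$2$1 * y$1 + h$2$2 * y$2) + \<gamma>1 * (1 - (h$1$1 * y$1 + h$1$2 * y$2) - (h$2$1 * y$1 + h$2$2 * y$2)))
       + c * (- b$2 * (h$2$1 * y$1 + h$2$2 * y$2) * (1 - (h$1$1 * y$1 + h$1$2 * y$2) - (h$2$1 * y$1 + h$2$2 * y$2)) + \<Omega>1 S * (h$1$1 * y$1 + h$1$2 * y$2) - \<Omega>2 S * (h$2$1 * y$1 + h$2$2 * y$2) + \<gamma>2 * (1 - (h$1$1 * y$1 + h$1$2 * y$2) - (h$2$1 * y$1 + h$2$2 * y$2)))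
       = - (b$1*h$1$1 + b$2*h$2$1) * y$1 * (1 - y$1 - y$2) - ((1-c)*\<Omega>1 S + (1-a)*\<Omega>2 S + (a*b$1*h$1$1 + c*b$2*h$2$1 - (b$1*h$1$1 + b$2*h$2$1))*(1 - y$1 - y$2)) * y$1
         + (c*\<Omega>1 S + a*\<Omega>2 S - (a*b$1*h$1$2 + c*b$2*h$2$2)*(1 - y$1 - y$2)) * y$2 + (a*\<gamma>1 + c*\<gamma>2) * (1 - y$1 - y$2)
       \<and> (1-a) * (- b$1 * (h$1$1 * y$1 + h$1$2 * y$2) * (1 - (h$1$1 * y$1 + h$1$2 * y$2) - (h$2$1 * y$1 + h$2$2 * y$2)) - \<Omega>1 S * (h$1$1 * y$1 + h$1$2 * y$2) + \<Omega>2 S * (h$2$1 * y$1 + h$2$2 * y$2) + \<gamma>1 * (1 - (h$1$1 * y$1 + h$1$2 * y$2) - (h$2$1 * y$1 + h$2$2 * y$2)))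
       + (1-c) * (- b$2 * (h$2$1 * y$1 + h$2$2 * y$2) * (1 - (h$1$1 * y$1 + h$1$2 * y$2) - (h$2$1 * y$1 + h$2$2 * y$2)) + \<Omega>1 S * (h$1$1 * y$1 + h$1$2 * y$2) - \<Omega>2 S * (h$2$1 * y$1 + h$2$2 * y$2) + \<gamma>2 * (1 - (h$1$1 * y$1 + h$1$2 * y$2) - (h$2$1 * y$1 + h$2$2 * y$2)))
       = - (b$1*h$1$2 + b$2*h$2$2) * y$2 * (1 - y$1 - y$2) + ((1-c)*\<Omega>1 S + (1-a)*\<Omega>2 S + (a*b$1*h$1$1 + c*b$2*h$2$1 - (b$1*h$1$1 + b$2*h$2$1))*(1 - y$1 - y$2)) * y$1
         - (c*\<Omega>1 S + a*\<Omega>2 S - (a*b$1*h$1$2 + c*b$2*h$2$2)*(1 - y$1 - y$2)) * y$2 + ((1-a)*\<gamma>1 + (1-c)*\<gamma>2) * (1 - y$1 - y$2)"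
      using alg1[where a=a and c=c and hA="h$1$1" and hB="h$1$2" and hC="h$2$1" and hD="h$2$2"
         and bA="b$1" and bB="b$2" and yA="y$1" and yB="y$2" and wA="\<Omega>1 S" and wB="\<Omega>2 S"
         and gA=\<gamma>1 and gB=\<gamma>2, OF ac GE(4-7)]
      unfolding Let_def .
    have c1: "(push_lin g F y)$1 = a * (F S)$1 + c * (F S)$2"
      and c2: "(push_lin g F y)$2 = (1-a) * (F S)$1 + (1-c) * (F S)$2"
      unfolding pl mv2 GE(1,2) a_def c_def by simp_all
    show "let I = 1 - y$1 - y$2 in
           push_lin g F y = vector [- b'$1 * y$1 * I - W1 y * y$1 + W2 y * y$2 + (a*\<gamma>1 + c*\<gamma>2) * I,
                         - b'$2 * y$2 * I + W1 y * y$1 - W2 y * y$2 + ((1-a)*\<gamma>1 + (1-c)*\<gamma>2) * I]"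
      unfolding Let_def vec_eq_iff forall_2 c1 c2 vector_2 FS S1 S2 W1y W2y b'1 b'2 d1_def d2_def
      using A2 by (simp only:)
  qed
  show ?thesis
    unfolding ssiss_def h_def[symmetric] b'_def[symmetric]
    apply (rule conjI[OF b'B])
    apply (rule exI[of _ W1], rule exI[of _ W2], rule exI[of _ "a*\<gamma>1 + c*\<gamma>2"], rule exI[of _ "(1-a)*\<gamma>1 + (1-c)*\<gamma>2"])
    using sW1 sW2 gs' eq by blast
qed



lemma L_rows: "vector [1,0] v* L_phi b = b" "vector [0,-1] v* L_phi b = vector [1,1]"
  by (simp_all add: vec_eq_iff forall_2 vector_matrix_mult_def sum_2 L_phi_def)

lemma part2:
  assumes "ssiss F b" "ssiss F' b'"
    "\<forall>p\<in>P_cal. push_phi b F p = model_field f p"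
    "\<forall>p\<in>P_cal. push_phi b' F' p = model_field f p"
  shows "\<exists>!g. g \<in> G_sigma \<and> b' = b v* matrix_inv g \<and> (\<forall>S\<in>P_sigma. F' S = push_lin g F S)"
proof -
  have bB: "b \<in> B_cal" and bB': "b' \<in> B_cal" using assms(1,2) unfolding ssiss_def by auto
  define L where "L = L_phi b"
  define L' where "L' = L_phi b'"
  define Li where "Li = matrix_inv L"
  define Li' where "Li' = matrix_inv L'"
  have LL: "L ** Li = mat 1" "Li ** L = mat 1" using L_inv[OF bB] L_def Li_def by auto
  have LL': "L' ** Li' = mat 1" "Li' ** L' = mat 1" using L_inv[OF bB'] L'_def Li'_def by auto
  define g0 where "g0 = Li' ** L"
  have mi: "matrix_inv g0 = Li ** L'"
  proof (rule matrix_inv_eq)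
    have "g0 ** (Li ** L') = Li' ** ((L ** Li) ** L')" unfolding g0_def by (simp add: matrix_mul_assoc)
    then show "g0 ** (Li ** L') = mat 1" using LL LL' by simp
    have "(Li ** L') ** g0 = Li ** ((L' ** Li') ** L)" unfolding g0_def by (simp add: matrix_mul_assoc)
    then show "(Li ** L') ** g0 = mat 1" using LL LL' by simp
  qed
  have col: "(vector [1,1] :: real^2) v* g0 = vector [1,1]"
  proof -
    have "(vector [1,1] :: real^2) v* Li' = (vector [0,-1] v* L') v* Li'"
      unfolding L'_def L_rows ..
    also have "\<dots> = vector [0,-1]" by (simp add: vector_matrix_mul_assoc LL')
    finally have "(vector [1,1] :: real^2) v* Li' = vector [0,-1]" .
    then show ?thesis unfolding g0_def vector_matrix_mul_assoc[symmetric] L_def using L_rows(2)[of b] by simp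
  qed
  have dL: "det L < 0" using bB unfolding L_def B_cal_def L_phi_def by (simp add: det_2)
  have dL': "det L' < 0" using bB' unfolding L'_def B_cal_def L_phi_def by (simp add: det_2)
  have "det Li' * det L' = 1" using LL'(2) by (metis det_I det_mul)
  then have "det Li' < 0" using dL' by (metis mult_pos_neg not_less_iff_gr_or_eq zero_less_one mult_nonneg_nonpos
       less_eq_real_def not_one_le_zero)
  then have dg: "det g0 > 0" unfolding g0_def det_mul using dL by (simp add: mult_neg_neg)
  have gG: "g0 \<in> G_sigma" using col dg unfolding G_sigma_def one_v_mat by (simp add: vec_eq_iff forall_2)
  have bb: "b' = b v* matrix_inv g0"
  proof -
    have "b v* matrix_inv g0 = ((vector [1,0] v* L) v* Li) v* L'"
      unfolding mi L_def L_rows vector_matrix_mul_assoc ..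
    also have "\<dots> = b'" by (simp add: vector_matrix_mul_assoc LL L'_def L_rows)
    finally show ?thesis by simp
  qed
  have FF: "\<forall>S\<in>P_sigma. F' S = push_lin g0 F S"
  proof
    fix S assume S: "S \<in> P_sigma"
    define p where "p = L' *v S + vector [0,1]"
    have pP: "p \<in> P_cal" using S unfolding p_def P_cal_def P_sigma_def L'_def L_phi_def
      by (simp add: mv2)
    have "push_phi b' F' p = push_phi b F p" using assms(3,4) pP by simp
    then have "L' *v F' (Li' *v (L' *v S)) = L *v F (Li *v (L' *v S))"
      unfolding push_phi_def push_aff_def p_def L_def[symmetric] L'_def[symmetric] Li_def[symmetric]
        Li'_def[symmetric] by simp
    then have "L' *v F' S = L *v F ((Li ** L') *v S)"
      by (simp add: matrix_vector_mul_assoc LL')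
    then have "Li' *v (L' *v F' S) = Li' *v (L *v F ((Li ** L') *v S))" by simp
    then show "F' S = push_lin g0 F S"
      unfolding push_lin_def push_aff_def mi g0_def[symmetric]
      by (simp add: matrix_vector_mul_assoc LL' g0_def)
  qed
  show ?thesis
  proof (rule ex1I[of _ g0])
    show "g0 \<in> G_sigma \<and> b' = b v* matrix_inv g0 \<and> (\<forall>S\<in>P_sigma. F' S = push_lin g0 F S)"
      using gG bb FF by blast
  next
    fix g assume g: "g \<in> G_sigma \<and> b' = b v* matrix_inv g \<and> (\<forall>S\<in>P_sigma. F' S = push_lin g F S)"
    have "L ** matrix_inv g = L'" using L_G[of g b] g L_def L'_def by simp
    then have "Li ** (L ** matrix_inv g) = Li ** L'" by simp
    then have hg: "matrix_inv g = matrix_inv g0" unfolding mi matrix_mul_assoc LL by simp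
    have "g = g ** (matrix_inv g0 ** g0)" using G_inv[OF gG] by simp
    also have "\<dots> = (g ** matrix_inv g) ** g0" unfolding hg by (simp add: matrix_mul_assoc)
    also have "\<dots> = g0" using G_inv g by simp
    finally show "g = g0" .
  qed
qed

theorem corollary3p10:
  shows "(\<forall>F b f g.
            ssiss F b \<and> smooth_on_set P_cal f \<and>
            (\<forall>p\<in>P_cal. push_phi b F p = model_field f p) \<and> g \<in> G_sigma \<longrightarrow>
              ssiss (push_lin g F) (b v* matrix_inv g) \<and>
              (\<forall>p\<in>P_cal. push_phi (b v* matrix_inv g) (push_lin g F) p = model_field f p))
       \<and> (\<forall>F F' b b' f.
            ssiss F b \<and> ssiss F' b' \<and> smooth_on_set P_cal f \<and>
            (\<forall>p\<in>P_cal. push_phi b F p = model_field f p) \<and>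
            (\<forall>p\<in>P_cal. push_phi b' F' p = model_field f p) \<longrightarrow>
              (\<exists>!g. g \<in> G_sigma \<and> b' = b v* matrix_inv g \<and>
                     (\<forall>S\<in>P_sigma. F' S = push_lin g F S)))"
proof (intro conjI allI impI)
  fix F b f g
  assume a: "ssiss F b \<and> smooth_on_set P_cal f \<and>
            (\<forall>p\<in>P_cal. push_phi b F p = model_field f p) \<and> g \<in> G_sigma"
  then have bB: "b \<in> B_cal" unfolding ssiss_def by auto
  show "ssiss (push_lin g F) (b v* matrix_inv g)" using ssiss_G a by blast
  show "\<forall>p\<in>P_cal. push_phi (b v* matrix_inv g) (push_lin g F) p = model_field f p"
    using push_phi_G[OF bB] a by auto
next
  fix F F' b b' f
  assume "ssiss F b \<and> ssiss F' b' \<and> smooth_on_set P_cal f \<and>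
            (\<forall>p\<in>P_cal. push_phi b F p = model_field f p) \<and>
            (\<forall>p\<in>P_cal. push_phi b' F' p = model_field f p)"
  then show "\<exists>!g. g \<in> G_sigma \<and> b' = b v* matrix_inv g \<and>
                     (\<forall>S\<in>P_sigma. F' S = push_lin g F S)"
    using part2 by blast
qed

end
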